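(* Assume the setting and hypotheses of the following: $(y_i)_{i\ge1}$ is a real sequence, $\mathbf{y}=(y_1,\dots,y_n)$, $\overline{\mathbf{y}}_n=\frac1n\sum_{i\le n}y_i\to\overline{y}_\infty\ne0$; $q=q(n)$, $p=p(n)>0$, $T=T(n)\ge1$ integers with $\log n\le qn\le\sqrt n$ and $T=o(qn)$; $\mathbf{A}$ is the adjacency matrix of $G(n,q)$. Suppose moreover $npq\ge1+\epsilon$ for some fixed $\epsilon>0$ (i.e. $p\,\mathbb{E}[\lambda_1]\ge1+\epsilon$, using $\mathbb{E}[\lambda_1]=nq$). Fix an index $i$. Then: (a) if $T\le(1-\delta)\frac{\log n}{\log(npq)}$ for some fixed $\delta>0$, then $\mathbb{E}[\mathrm{CC}(\mathbf{A},p,T,\mathbf{y})_i]=o(n)$; (b) if $T\ge(1+\delta)\frac{\log n}{\log(npq)}$ for some fixed $\delta>0$, then $|\mathbb{E}[\mathrm{CC}(\mathbf{A},p,T,\mathbf{y})_i]|=\Omega(n)$, i.e. it is at least $cn$ for some $c>0$ and all large $n$.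
   Context: Contextual centrality: $\mathrm{CC}(\mathbf{A},p,T,\mathbf{y})=\sum_{t=0}^{T}(p\mathbf{A})^t\mathbf{y}$. $G(n,q)$ is the Erdős–Rényi random graph: its adjacency matrix is a random symmetric $n\times n$ matrix with zero diagonal and independent Bernoulli($q$) entries above the diagonal. $\log$ is the natural logarithm; $p,q,T$ depend on $n$ and asymptotics are as $n\to\infty$. *)

theory Defs
  imports "HOL-Analysis.Analysis" "HOL-Library.Landau_Symbols"
begin

text \<open>Vertices are 1..n. Matrices/vectors are functions on nat, used only on {1..n}.\<close>

definition vpairs :: "nat \<Rightarrow> (nat \<times> nat) set" where
  "vpairs n = {(a, b). 1 \<le> a \<and> a < b \<and> b \<le> n}"

definition adj :: "(nat \<times> nat) set \<Rightarrow> nat \<Rightarrow> nat \<Rightarrow> real" where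
  "adj E a b = (if (min a b, max a b) \<in> E \<and> a \<noteq> b then 1 else 0)"

definition gnp_weight :: "nat \<Rightarrow> real \<Rightarrow> (nat \<times> nat) set \<Rightarrow> real" where
  "gnp_weight n q E = q ^ card E * (1 - q) ^ (card (vpairs n) - card E)"

definition gnp_expect :: "nat \<Rightarrow> real \<Rightarrow> ((nat \<Rightarrow> nat \<Rightarrow> real) \<Rightarrow> real) \<Rightarrow> real" where
  "gnp_expect n q f = (\<Sum>E\<in>Pow (vpairs n). gnp_weight n q E * f (adj E))"

fun matpow :: "nat \<Rightarrow> (nat \<Rightarrow> nat \<Rightarrow> real) \<Rightarrow> nat \<Rightarrow> nat \<Rightarrow> nat \<Rightarrow> real" where
  "matpow n M 0 = (\<lambda>a b. if a = b then 1 else 0)"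
| "matpow n M (Suc t) = (\<lambda>a b. \<Sum>k=1..n. M a k * matpow n M t k b)"

definition mulvec :: "nat \<Rightarrow> (nat \<Rightarrow> nat \<Rightarrow> real) \<Rightarrow> (nat \<Rightarrow> real) \<Rightarrow> nat \<Rightarrow> real" where
  "mulvec n M y = (\<lambda>a. \<Sum>b=1..n. M a b * y b)"

definition CC :: "nat \<Rightarrow> (nat \<Rightarrow> nat \<Rightarrow> real) \<Rightarrow> real \<Rightarrow> nat \<Rightarrow> (nat \<Rightarrow> real) \<Rightarrow> nat \<Rightarrow> real" where
  "CC n A p T y = (\<lambda>a. \<Sum>t=0..T. mulvec n (matpow n (\<lambda>u v. p * A u v) t) y a)"

end

theory Submission
  imports Defs "HOL-Real_Asymp.Real_Asymp"
begin


lemma sum_Pow_insert: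
  assumes "finite V" "e \<notin> V"
  shows "(\<Sum>E\<in>Pow (insert e V). h E) = (\<Sum>E\<in>Pow V. h E + h (insert e E))"
proof -
  have "(\<Sum>E\<in>Pow (insert e V). h E) = (\<Sum>E\<in>Pow V. h E) + (\<Sum>E\<in>insert e ` Pow V. h E)"
    unfolding Pow_insert by (rule sum.union_disjoint) (use assms in auto)
  also have "(\<Sum>E\<in>insert e ` Pow V. h E) = (\<Sum>E\<in>Pow V. h (insert e E))"
    by (rule sum.reindex_cong[where l="insert e"]) (use assms in \<open>auto simp: inj_on_def\<close>)
  finally show ?thesis by (simp add: sum.distrib)
qed

definition wt :: "'a set \<Rightarrow> real \<Rightarrow> 'a set \<Rightarrow> real" where
  "wt V q E = q ^ card E * (1 - q) ^ (card V - card E)"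

lemma wt_insert1:
  assumes "finite V" "e \<notin> V" "E \<subseteq> V"
  shows "wt (insert e V) q E = (1 - q) * wt V q E"
proof -
  have "card E \<le> card V" using assms card_mono by blast
  then have "card (insert e V) - card E = Suc (card V - card E)" using assms by simp
  then show ?thesis unfolding wt_def by simp
qed

lemma wt_insert2:
  assumes "finite V" "e \<notin> V" "E \<subseteq> V"
  shows "wt (insert e V) q (insert e E) = q * wt V q E"
proof -
  have fE: "finite E" using assms finite_subset by blast
  have "e \<notin> E" using assms by blast
  then have "card (insert e E) = Suc (card E)" using fE by simp
  moreover have "card (insert e V) = Suc (card V)" using assms by simp
  ultimately show ?thesis unfolding wt_def by simp
qed

lemma wt_sum1: "finite V \<Longrightarrow> (\<Sum>E\<in>Pow V. wt V q E) = 1"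
proof (induction V rule: finite_induct)
  case empty then show ?case by (simp add: wt_def)
next
  case (insert e V)
  have "(\<Sum>E\<in>Pow (insert e V). wt (insert e V) q E)
      = (\<Sum>E\<in>Pow V. wt (insert e V) q E + wt (insert e V) q (insert e E))"
    by (rule sum_Pow_insert) (use insert in auto)
  also have "\<dots> = (\<Sum>E\<in>Pow V. wt V q E)"
    by (rule sum.cong) (use insert in \<open>auto simp: wt_insert1 wt_insert2 algebra_simps\<close>)
  finally show ?case using insert by simp
qed

lemma forced_gen:
  assumes "finite V" "e \<in> V"
  shows "(\<Sum>E\<in>Pow V. wt V q E * (if e \<in> E then g E else 0))
       = q * (\<Sum>E\<in>Pow V. wt V q E * g (insert e E))"
proof -
  define V' where "V' = V - {e}"
  have V: "V = insert e V'" "e \<notin> V'" "finite V'" using assms unfolding V'_def by auto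
  have "(\<Sum>E\<in>Pow V. wt V q E * (if e \<in> E then g E else 0))
      = (\<Sum>E\<in>Pow V'. wt V q E * (if e \<in> E then g E else 0) + wt V q (insert e E) * g (insert e E))"
    unfolding V(1) using sum_Pow_insert[OF V(3) V(2), of "\<lambda>E. wt (insert e V') q E * (if e \<in> E then g E else 0)"] by simp
  also have "\<dots> = (\<Sum>E\<in>Pow V'. q * (wt V' q E * g (insert e E)))"
    by (rule sum.cong) (use V in \<open>auto simp: wt_insert2 subset_iff\<close>)
  finally have L: "(\<Sum>E\<in>Pow V. wt V q E * (if e \<in> E then g E else 0)) = (\<Sum>E\<in>Pow V'. q * (wt V' q E * g (insert e E)))" .
  have "(\<Sum>E\<in>Pow V. wt V q E * g (insert e E))
      = (\<Sum>E\<in>Pow V'. wt V q E * g (insert e E) + wt V q (insert e E) * g (insert e (insert e E)))"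
    unfolding V(1) by (rule sum_Pow_insert) (use V in auto)
  also have "\<dots> = (\<Sum>E\<in>Pow V'. wt V' q E * g (insert e E))"
    by (rule sum.cong) (use V in \<open>auto simp: wt_insert1 wt_insert2 algebra_simps\<close>)
  finally have R: "(\<Sum>E\<in>Pow V. wt V q E * g (insert e E)) = (\<Sum>E\<in>Pow V'. wt V' q E * g (insert e E))" .
  show ?thesis unfolding L R by (simp add: sum_distrib_left)
qed

definition Exg :: "nat \<Rightarrow> real \<Rightarrow> ((nat \<times> nat) set \<Rightarrow> real) \<Rightarrow> real" where
  "Exg n q g = (\<Sum>E\<in>Pow (vpairs n). gnp_weight n q E * g E)"

lemma vpairs_sub: "vpairs n \<subseteq> {1..n} \<times> {1..n}"
  unfolding vpairs_def by auto

lemma finite_vpairs[simp]: "finite (vpairs n)"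
  by (rule finite_subset[OF vpairs_sub]) auto

lemma gnp_weight_wt: "gnp_weight n q E = wt (vpairs n) q E"
  unfolding gnp_weight_def wt_def by simp

lemma gnp_weight_nonneg: "0 \<le> q \<Longrightarrow> q \<le> 1 \<Longrightarrow> 0 \<le> gnp_weight n q E"
  unfolding gnp_weight_def by simp

lemma gnp_expect_Ex: "gnp_expect n q f = Exg n q (\<lambda>E. f (adj E))"
  unfolding gnp_expect_def Exg_def ..

lemma Ex_one: "Exg n q (\<lambda>_. 1) = 1"
  unfolding Exg_def gnp_weight_wt using wt_sum1[of "vpairs n" q] by simp

lemma Ex_const: "Exg n q (\<lambda>_. c) = c"
  using Ex_one[of n q] unfolding Exg_def by (simp add: sum_distrib_right[symmetric])

lemma Ex_mono:
  assumes "0 \<le> q" "q \<le> 1" "\<And>E. E \<subseteq> vpairs n \<Longrightarrow> g E \<le> h E"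
  shows "Exg n q g \<le> Exg n q h"
  unfolding Exg_def by (rule sum_mono) (use assms gnp_weight_nonneg in \<open>auto intro: mult_left_mono\<close>)

lemma Ex_nonneg:
  assumes "0 \<le> q" "q \<le> 1" "\<And>E. E \<subseteq> vpairs n \<Longrightarrow> 0 \<le> g E"
  shows "0 \<le> Exg n q g"
  using Ex_mono[of q n "\<lambda>_. 0" g] assms Ex_const[of n q 0] by simp

lemma Ex_add: "Exg n q (\<lambda>E. g E + h E) = Exg n q g + Exg n q h"
  unfolding Exg_def by (simp add: algebra_simps sum.distrib)

lemma Ex_cmult: "Exg n q (\<lambda>E. c * g E) = c * Exg n q g"
  unfolding Exg_def by (simp add: algebra_simps sum_distrib_left)

lemma Ex_sum: "Exg n q (\<lambda>E. \<Sum>k\<in>K. g k E) = (\<Sum>k\<in>K. Exg n q (g k))"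
  unfolding Exg_def by (simp add: sum_distrib_left sum.swap[of _ _ K])

lemma Ex_forced:
  assumes "e \<in> vpairs n"
  shows "Exg n q (\<lambda>E. (if e \<in> E then 1 else 0) * g E) = q * Exg n q (\<lambda>E. g (insert e E))"
proof -
  have "(\<Sum>E\<in>Pow (vpairs n). wt (vpairs n) q E * ((if e \<in> E then 1 else 0) * g E))
     = (\<Sum>E\<in>Pow (vpairs n). wt (vpairs n) q E * (if e \<in> E then g E else 0))"
    by (rule sum.cong) auto
  then show ?thesis unfolding Exg_def gnp_weight_wt using forced_gen[OF finite_vpairs assms, of q g]
    by simp
qed

definition edge :: "nat \<Rightarrow> nat \<Rightarrow> nat \<times> nat" where "edge a b = (min a b, max a b)"

lemma adj_edge: "adj E a b = (if edge a b \<in> E \<and> a \<noteq> b then 1 else 0)"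
  unfolding adj_def edge_def ..

lemma adj_nonneg[simp]: "0 \<le> adj E a b" and adj_le1[simp]: "adj E a b \<le> 1"
  unfolding adj_def by auto

lemma adj_diag[simp]: "adj E a a = 0"
  unfolding adj_def by auto

lemma adj_mono: "E \<subseteq> E' \<Longrightarrow> adj E a b \<le> adj E' a b"
  unfolding adj_def by auto

lemma edge_vpairs: "a \<in> {1..n} \<Longrightarrow> b \<in> {1..n} \<Longrightarrow> a \<noteq> b \<Longrightarrow> edge a b \<in> vpairs n"
  unfolding edge_def vpairs_def by auto

lemma adj_off: "a \<noteq> b \<Longrightarrow> adj E a b = (if edge a b \<in> E then 1 else 0)"
  unfolding adj_edge by simp

lemma matpow_nonneg: "(\<And>u v. 0 \<le> M u v) \<Longrightarrow> 0 \<le> matpow n M t a b"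
  by (induction t arbitrary: a) (auto intro!: sum_nonneg)

lemma matpow_mono:
  assumes "\<And>u v. 0 \<le> M u v" "\<And>u v. M u v \<le> M' u v"
  shows "matpow n M t a b \<le> matpow n M' t a b"
proof (induction t arbitrary: a)
  case 0 then show ?case by simp
next
  case (Suc t)
  show ?case unfolding matpow.simps
    by (rule sum_mono, rule mult_mono) (use assms Suc matpow_nonneg[of M n t] order_trans in blast)+
qed

lemma matpow_scale: "matpow n (\<lambda>u v. p * M u v) t a b = p ^ t * matpow n M t a b"
  by (induction t arbitrary: a) (auto simp: sum_distrib_left algebra_simps)

lemma matpow_adj_nonneg: "0 \<le> matpow n (adj E) t a b"
  by (rule matpow_nonneg) simp

lemma matpow_adj_mono: "E \<subseteq> E' \<Longrightarrow> matpow n (adj E) t a b \<le> matpow n (adj E') t a b"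
  by (rule matpow_mono) (auto intro: adj_mono)

definition sw :: "nat \<Rightarrow> nat \<Rightarrow> nat \<Rightarrow> nat" where
  "sw x y z = (if z = x then y else if z = y then x else z)"

lemma sw_sw[simp]: "sw x y (sw x y z) = z"
  unfolding sw_def by auto

lemma sw_inj: "sw x y a = sw x y b \<longleftrightarrow> a = b"
  by (metis sw_sw)

lemma sw_range: "x \<in> {1..n} \<Longrightarrow> y \<in> {1..n} \<Longrightarrow> sw x y z \<in> {1..n} \<longleftrightarrow> z \<in> {1..n}"
  unfolding sw_def by auto

lemma edge_sym: "edge a b = edge b a"
  unfolding edge_def by (auto simp: min_def max_def)

definition emap :: "nat \<Rightarrow> nat \<Rightarrow> nat \<times> nat \<Rightarrow> nat \<times> nat" where
  "emap x y e = edge (sw x y (fst e)) (sw x y (snd e))"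

lemma emap_edge: "emap x y (edge a b) = edge (sw x y a) (sw x y b)"
  unfolding emap_def edge_def by (cases "a \<le> b") (auto simp: min_def max_def edge_sym[unfolded edge_def])

lemma emap_emap: "e \<in> vpairs n \<Longrightarrow> emap x y (emap x y e) = e"
proof -
  assume "e \<in> vpairs n"
  then obtain c d where e: "e = (c, d)" "c < d" unfolding vpairs_def by auto
  then have "e = edge c d" unfolding edge_def by simp
  then show ?thesis by (simp add: emap_edge)
qed

lemma emap_vpairs:
  assumes "x \<in> {1..n}" "y \<in> {1..n}" "e \<in> vpairs n"
  shows "emap x y e \<in> vpairs n"
proof -
  obtain c d where e: "e = (c, d)" "c < d" "c \<in> {1..n}" "d \<in> {1..n}"
    using assms(3) unfolding vpairs_def by auto
  show ?thesis unfolding e emap_def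
    by (rule edge_vpairs) (use e assms sw_range sw_inj in auto)
qed

definition smap :: "nat \<Rightarrow> nat \<Rightarrow> (nat \<times> nat) set \<Rightarrow> (nat \<times> nat) set" where
  "smap x y E = emap x y ` E"

lemma smap_sub:
  assumes "x \<in> {1..n}" "y \<in> {1..n}" "E \<subseteq> vpairs n"
  shows "smap x y E \<subseteq> vpairs n"
  unfolding smap_def using emap_vpairs[OF assms(1,2)] assms(3) by auto

lemma smap_smap:
  assumes "E \<subseteq> vpairs n"
  shows "smap x y (smap x y E) = E"
proof -
  have "smap x y (smap x y E) = (\<lambda>e. emap x y (emap x y e)) ` E"
    unfolding smap_def by (simp add: image_image)
  also have "\<dots> = (\<lambda>e. e) ` E"
    by (rule image_cong) (use emap_emap assms in blast)+
  finally show ?thesis by simp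
qed

lemma smap_card:
  assumes "E \<subseteq> vpairs n"
  shows "card (smap x y E) = card E"
proof -
  have "inj_on (emap x y) E"
    by (rule inj_on_inverseI[where g="emap x y"]) (use emap_emap assms in blast)
  then show ?thesis unfolding smap_def by (rule card_image)
qed

lemma adj_smap:
  assumes "E \<subseteq> vpairs n"
  shows "adj (smap x y E) a b = adj E (sw x y a) (sw x y b)"
proof (cases "a = b")
  case True then show ?thesis by simp
next
  case False
  then have ne: "sw x y a \<noteq> sw x y b" using sw_inj by metis
  have "edge a b \<in> smap x y E \<longleftrightarrow> edge (sw x y a) (sw x y b) \<in> E"
  proof
    assume "edge a b \<in> smap x y E"
    then obtain e where e: "e \<in> E" "edge a b = emap x y e" unfolding smap_def by auto
    then have "emap x y (edge a b) = e" using emap_emap assms e by (metis subsetD)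
    then show "edge (sw x y a) (sw x y b) \<in> E" using e by (metis emap_edge)
  next
    assume "edge (sw x y a) (sw x y b) \<in> E"
    then have "emap x y (edge (sw x y a) (sw x y b)) \<in> smap x y E" unfolding smap_def by auto
    then show "edge a b \<in> smap x y E" by (simp add: emap_edge)
  qed
  then show ?thesis using False ne by (simp add: adj_off)
qed

lemma sum_sw:
  assumes "x \<in> {1..n}" "y \<in> {1..n}"
  shows "(\<Sum>k=1..n. f (sw x y k)) = (\<Sum>k=1..n. f k)"
  by (rule sum.reindex_bij_witness[where i="sw x y" and j="sw x y"]) (use sw_range[OF assms] in auto)

lemma matpow_smap:
  assumes "E \<subseteq> vpairs n" "x \<in> {1..n}" "y \<in> {1..n}"
  shows "matpow n (adj (smap x y E)) t a b = matpow n (adj E) t (sw x y a) (sw x y b)"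
proof (induction t arbitrary: a)
  case 0 then show ?case using sw_inj by simp
next
  case (Suc t)
  have "matpow n (adj (smap x y E)) (Suc t) a b
      = (\<Sum>k=1..n. adj E (sw x y a) (sw x y k) * matpow n (adj E) t (sw x y k) (sw x y b))"
    by (simp add: adj_smap[OF assms(1)] Suc)
  also have "\<dots> = (\<Sum>k=1..n. adj E (sw x y a) k * matpow n (adj E) t k (sw x y b))"
    by (rule sum_sw[OF assms(2,3), of "\<lambda>k. adj E (sw x y a) k * matpow n (adj E) t k (sw x y b)"])
  finally show ?case by simp
qed

lemma Ex_smap:
  assumes "x \<in> {1..n}" "y \<in> {1..n}"
  shows "Exg n q (\<lambda>E. g (smap x y E)) = Exg n q g"
  unfolding Exg_def
  by (rule sum.reindex_bij_witness[where i="smap x y" and j="smap x y"])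
     (use smap_smap smap_sub[OF assms] smap_card in \<open>auto simp: gnp_weight_def\<close>)

definition MM :: "nat \<Rightarrow> real \<Rightarrow> nat \<Rightarrow> nat \<Rightarrow> nat \<Rightarrow> real" where
  "MM n q t a b = Exg n q (\<lambda>E. matpow n (adj E) t a b)"

lemma MM_sw:
  assumes "x \<in> {1..n}" "y \<in> {1..n}"
  shows "MM n q t (sw x y a) (sw x y b) = MM n q t a b"
proof -
  have "MM n q t (sw x y a) (sw x y b) = Exg n q (\<lambda>E. matpow n (adj (smap x y E)) t a b)"
    unfolding MM_def Exg_def by (rule sum.cong) (auto simp: matpow_smap[OF _ assms])
  also have "\<dots> = MM n q t a b" unfolding MM_def by (rule Ex_smap[OF assms])
  finally show ?thesis .
qed

lemma MM_sym_row:
  assumes "i \<in> {1..n}" "j \<in> {1..n}" "k \<in> {1..n}" "i \<noteq> j" "i \<noteq> k"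
  shows "MM n q t i k = MM n q t i j"
proof -
  have "MM n q t (sw k j i) (sw k j k) = MM n q t i k" by (rule MM_sw) (use assms in auto)
  moreover have "sw k j i = i" "sw k j k = j" using assms unfolding sw_def by auto
  ultimately show ?thesis by simp
qed

lemma MM_transp:
  assumes "i \<in> {1..n}" "k \<in> {1..n}"
  shows "MM n q t k i = MM n q t i k"
proof -
  have "MM n q t (sw i k i) (sw i k k) = MM n q t i k" by (rule MM_sw) (use assms in auto)
  moreover have "sw i k i = k" "sw i k k = i" unfolding sw_def by auto
  ultimately show ?thesis by simp
qed

lemma edge_inj: "edge v k = edge v k' \<Longrightarrow> k = k'"
  unfolding edge_def by (auto simp: min_def max_def split: if_splits)

lemma matpow_Suc_row:
  "(\<Sum>b=1..n. matpow n M (Suc t) v b) = (\<Sum>k=1..n. M v k * (\<Sum>b=1..n. matpow n M t k b))"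
  by (simp add: sum_distrib_left) (rule sum.swap)

lemma row_upper:
  assumes q: "0 \<le> q" "q \<le> 1"
  shows "F \<subseteq> vpairs n \<Longrightarrow> v \<in> {1..n} \<Longrightarrow>
    Exg n q (\<lambda>E. \<Sum>b=1..n. matpow n (adj (E \<union> F)) t v b) \<le> (real n * q + real (card F) + real t) ^ t"
proof (induction t arbitrary: F v)
  case 0
  then have "(\<Sum>b=1..n. matpow n (adj (E \<union> F)) 0 v b) = 1" for E by simp
  then show ?case using Ex_const[of n q 1] by simp
next
  case (Suc t)
  define B where "B = real n * q + real (card F) + real (Suc t)"
  have B0: "0 \<le> B" unfolding B_def using q by simp
  define P where "P k \<longleftrightarrow> k \<noteq> v \<and> edge v k \<in> F" for k
  have fF: "finite F" using Suc.prems(1) finite_subset finite_vpairs by metis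
  have trm: "Exg n q (\<lambda>E. adj (E \<union> F) v k * (\<Sum>b=1..n. matpow n (adj (E \<union> F)) t k b))
      \<le> (if P k then B ^ t else 0) + q * B ^ t" if k: "k \<in> {1..n}" for k
  proof (cases "k = v")
    case True
    then show ?thesis using B0 q by (simp add: Ex_const)
  next
    case False
    note kv = False
    show ?thesis
    proof (cases "edge v k \<in> F")
      case True
      then have "Exg n q (\<lambda>E. adj (E \<union> F) v k * (\<Sum>b=1..n. matpow n (adj (E \<union> F)) t k b))
          = Exg n q (\<lambda>E. \<Sum>b=1..n. matpow n (adj (E \<union> F)) t k b)"
        using kv by (simp add: adj_off)
      also have "\<dots> \<le> (real n * q + real (card F) + real t) ^ t" by (rule Suc.IH) (use Suc.prems k in auto)
      also have "\<dots> \<le> B ^ t" unfolding B_def by (rule power_mono) (use q in auto)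
      moreover have "0 \<le> q * B ^ t" using q B0 by simp
      ultimately show ?thesis using True kv unfolding P_def by simp
    next
      case False
      have ev: "edge v k \<in> vpairs n" by (rule edge_vpairs) (use k Suc.prems kv in auto)
      have "Exg n q (\<lambda>E. adj (E \<union> F) v k * (\<Sum>b=1..n. matpow n (adj (E \<union> F)) t k b))
          = Exg n q (\<lambda>E. (if edge v k \<in> E then 1 else 0) * (\<Sum>b=1..n. matpow n (adj (E \<union> F)) t k b))"
        using kv False by (simp add: adj_off)
      also have "\<dots> = q * Exg n q (\<lambda>E. \<Sum>b=1..n. matpow n (adj (insert (edge v k) E \<union> F)) t k b)"
        by (rule Ex_forced[OF ev])
      also have "\<dots> = q * Exg n q (\<lambda>E. \<Sum>b=1..n. matpow n (adj (E \<union> insert (edge v k) F)) t k b)"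
        by (metis Un_insert_left Un_insert_right)
      also have "\<dots> \<le> q * (real n * q + real (card (insert (edge v k) F)) + real t) ^ t"
        by (rule mult_left_mono, rule Suc.IH) (use Suc.prems k ev q in auto)
      also have "\<dots> = q * B ^ t" using False fF unfolding B_def by (simp add: algebra_simps)
      finally show ?thesis using kv False unfolding P_def by simp
    qed
  qed
  have "Exg n q (\<lambda>E. \<Sum>b=1..n. matpow n (adj (E \<union> F)) (Suc t) v b)
      = (\<Sum>k=1..n. Exg n q (\<lambda>E. adj (E \<union> F) v k * (\<Sum>b=1..n. matpow n (adj (E \<union> F)) t k b)))"
    unfolding matpow_Suc_row by (rule Ex_sum)
  also have "\<dots> \<le> (\<Sum>k=1..n. (if P k then B ^ t else 0) + q * B ^ t)"
    by (rule sum_mono) (rule trm, simp)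
  also have "\<dots> = real (card {k\<in>{1..n}. P k}) * B ^ t + real n * q * B ^ t"
  proof -
    have "(\<Sum>k=1..n. (if P k then B ^ t else 0)) = (\<Sum>k\<in>{k\<in>{1..n}. P k}. B ^ t)"
      by (rule sum.inter_filter[symmetric]) simp
    then show ?thesis by (simp add: sum.distrib)
  qed
  also have "\<dots> \<le> real (card F) * B ^ t + real n * q * B ^ t"
  proof -
    have "card {k\<in>{1..n}. P k} \<le> card F"
      by (rule card_inj_on_le[where f="edge v"]) (use fF edge_inj in \<open>auto simp: P_def inj_on_def\<close>)
    then show ?thesis using B0 by (simp add: mult_right_mono)
  qed
  also have "\<dots> = (real (card F) + real n * q) * B ^ t" by (simp add: algebra_simps)
  also have "\<dots> \<le> B * B ^ t" by (rule mult_right_mono) (use B0 in \<open>auto simp: B_def\<close>)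
  finally show ?case unfolding B_def by simp
qed

lemma MM_nonneg: "0 \<le> q \<Longrightarrow> q \<le> 1 \<Longrightarrow> 0 \<le> MM n q t a b"
  unfolding MM_def by (rule Ex_nonneg) (auto intro: matpow_adj_nonneg)

lemma MM_Suc: "MM n q (Suc s) a b = (\<Sum>k=1..n. Exg n q (\<lambda>E. adj E a k * matpow n (adj E) s k b))"
  unfolding MM_def matpow.simps by (rule Ex_sum)

lemma card_minus2:
  assumes "i \<in> {1..n}" "j \<in> {1..n}" "i \<noteq> j"
  shows "card ({1..n} - {i, j}) = n - 2"
proof -
  have "card ({1..n} - {i, j}) = card {1..n} - card {i, j}"
    by (rule card_Diff_subset) (use assms in auto)
  then show ?thesis using assms by simp
qed

lemma b_rec:
  assumes q: "0 \<le> q" "q \<le> 1" and ij: "i \<in> {1..n}" "j \<in> {1..n}" "i \<noteq> j"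
  shows "q * (real n - 2) * MM n q s i j \<le> MM n q (Suc s) i j"
proof -
  have trm: "(if k \<in> {1..n} - {i, j} then q * MM n q s i j else 0)
      \<le> Exg n q (\<lambda>E. adj E i k * matpow n (adj E) s k j)" if k: "k \<in> {1..n}" for k
  proof (cases "k \<in> {1..n} - {i, j}")
    case False
    have "0 \<le> Exg n q (\<lambda>E. adj E i k * matpow n (adj E) s k j)"
      by (rule Ex_nonneg) (use q matpow_adj_nonneg in auto)
    then show ?thesis using False by (simp only: if_False)
  next
    case True
    have ev: "edge i k \<in> vpairs n" by (rule edge_vpairs) (use True ij in auto)
    have "q * MM n q s i j = q * MM n q s k j"
    proof -
      have "MM n q s (sw i k i) (sw i k j) = MM n q s i j" by (rule MM_sw) (use ij k in auto)
      moreover have "sw i k i = k" "sw i k j = j" using True ij unfolding sw_def by auto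
      ultimately show ?thesis by simp
    qed
    also have "\<dots> \<le> q * Exg n q (\<lambda>E. matpow n (adj (insert (edge i k) E)) s k j)"
      unfolding MM_def by (rule mult_left_mono, rule Ex_mono) (use q in \<open>auto intro: matpow_adj_mono\<close>)
    also have "\<dots> = Exg n q (\<lambda>E. (if edge i k \<in> E then 1 else 0) * matpow n (adj E) s k j)"
      by (rule Ex_forced[OF ev, symmetric])
    also have "\<dots> = Exg n q (\<lambda>E. adj E i k * matpow n (adj E) s k j)"
      using True by (simp add: adj_off)
    finally show ?thesis using True by simp
  qed
  have "q * (real n - 2) * MM n q s i j = (\<Sum>k=1..n. if k \<in> {1..n} - {i, j} then q * MM n q s i j else 0)"
  proof -
    have "(\<Sum>k=1..n. if k \<in> {1..n} - {i, j} then q * MM n q s i j else 0)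
        = (\<Sum>k\<in>{1..n} - {i, j}. q * MM n q s i j)"
      by (rule sum.mono_neutral_cong_right) auto
    also have "\<dots> = real (n - 2) * (q * MM n q s i j)" using card_minus2[OF ij] by simp
    also have "real (n - 2) = real n - 2" using ij by auto
    finally show ?thesis by simp
  qed
  also have "\<dots> \<le> MM n q (Suc s) i j" unfolding MM_Suc by (rule sum_mono) (rule trm, simp)
  finally show ?thesis .
qed

lemma a_rec:
  assumes q: "0 \<le> q" "q \<le> 1" and ij: "i \<in> {1..n}" "j \<in> {1..n}" "i \<noteq> j"
  shows "MM n q (Suc s) i i \<le> (real n - 1) * MM n q s i j"
proof -
  have trm: "Exg n q (\<lambda>E. adj E i k * matpow n (adj E) s k i)
      \<le> (if k \<in> {1..n} - {i} then MM n q s i j else 0)" if k: "k \<in> {1..n}" for k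
  proof (cases "k = i")
    case True
    then show ?thesis by (simp add: Ex_const)
  next
    case False
    have "Exg n q (\<lambda>E. adj E i k * matpow n (adj E) s k i) \<le> MM n q s k i"
      unfolding MM_def by (rule Ex_mono) (use q in \<open>auto intro!: mult_left_le_one_le matpow_adj_nonneg\<close>)
    also have "\<dots> = MM n q s i j" using MM_transp[OF ij(1) k] MM_sym_row[OF ij(1,2) k ij(3)] False by simp
    finally show ?thesis using False k by simp
  qed
  have "MM n q (Suc s) i i \<le> (\<Sum>k=1..n. if k \<in> {1..n} - {i} then MM n q s i j else 0)"
    unfolding MM_Suc by (rule sum_mono) (rule trm, simp)
  also have "\<dots> = (\<Sum>k\<in>{1..n} - {i}. MM n q s i j)"
    by (rule sum.mono_neutral_cong_right) auto
  also have "\<dots> = (real n - 1) * MM n q s i j" using ij by (simp add: of_nat_diff)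
  finally show ?thesis .
qed

lemma MM_0: "MM n q 0 a b = (if a = b then 1 else 0)"
  unfolding MM_def using Ex_const[of n q 1] Ex_const[of n q 0] by simp

lemma MM_1:
  assumes ij: "i \<in> {1..n}" "j \<in> {1..n}" "i \<noteq> j"
  shows "MM n q 1 i j = q"
proof -
  have "matpow n (adj E) 1 i j = adj E i j" for E
    using ij by (simp add: if_distrib cong: if_cong) 
  then have "MM n q 1 i j = Exg n q (\<lambda>E. (if edge i j \<in> E then 1 else 0) * 1)"
    unfolding MM_def using ij by (simp add: adj_off)
  also have "\<dots> = q" by (subst Ex_forced) (use edge_vpairs ij Ex_const in auto)
  finally show ?thesis .
qed

lemma row_sum_MM:
  assumes ij: "i \<in> {1..n}" "j \<in> {1..n}" "i \<noteq> j"
  shows "(\<Sum>b=1..n. f b * MM n q t i b) = f i * MM n q t i i + MM n q t i j * (\<Sum>b\<in>{1..n} - {i}. f b)"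
proof -
  have "(\<Sum>b=1..n. f b * MM n q t i b) = f i * MM n q t i i + (\<Sum>b\<in>{1..n} - {i}. f b * MM n q t i b)"
    by (rule sum.remove) (use ij in auto)
  also have "(\<Sum>b\<in>{1..n} - {i}. f b * MM n q t i b) = (\<Sum>b\<in>{1..n} - {i}. f b * MM n q t i j)"
    by (rule sum.cong) (use MM_sym_row[OF ij(1,2) _ ij(3)] in auto)
  also have "(\<Sum>b\<in>{1..n} - {i}. f b * MM n q t i j) = MM n q t i j * (\<Sum>b\<in>{1..n} - {i}. f b)"
    by (simp add: sum_distrib_left mult.commute)
  finally show ?thesis .
qed

lemma row_bound:
  assumes q: "0 \<le> q" "q \<le> 1" and ij: "i \<in> {1..n}" "j \<in> {1..n}" "i \<noteq> j"
  shows "MM n q t i i + (real n - 1) * MM n q t i j \<le> (real n * q + real t) ^ t"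
proof -
  have "Exg n q (\<lambda>E. \<Sum>b=1..n. matpow n (adj (E \<union> {})) t i b) \<le> (real n * q + real (card ({}::(nat\<times>nat) set)) + real t) ^ t"
    by (rule row_upper[OF q]) (use ij in auto)
  moreover have "Exg n q (\<lambda>E. \<Sum>b=1..n. matpow n (adj (E \<union> {})) t i b) = (\<Sum>b=1..n. 1 * MM n q t i b)"
    unfolding MM_def by (simp add: Ex_sum)
  moreover have "(\<Sum>b=1..n. 1 * MM n q t i b) = MM n q t i i + (real n - 1) * MM n q t i j"
    unfolding row_sum_MM[OF ij] using ij by (simp add: of_nat_diff)
  ultimately show ?thesis by simp
qed

lemma expect_CC:
  assumes ij: "i \<in> {1..n}" "j \<in> {1..n}" "i \<noteq> j"
  shows "gnp_expect n q (\<lambda>A. CC n A p T y i)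
    = (\<Sum>t=0..T. p ^ t * (y i * MM n q t i i + MM n q t i j * ((\<Sum>b=1..n. y b) - y i)))"
proof -
  have "gnp_expect n q (\<lambda>A. CC n A p T y i)
      = Exg n q (\<lambda>E. \<Sum>t=0..T. p ^ t * (\<Sum>b=1..n. y b * matpow n (adj E) t i b))"
    unfolding gnp_expect_Ex CC_def mulvec_def matpow_scale
    by (simp add: sum_distrib_left mult_ac)
  also have "\<dots> = (\<Sum>t=0..T. p ^ t * (\<Sum>b=1..n. y b * MM n q t i b))"
    unfolding MM_def by (simp add: Ex_sum Ex_cmult)
  also have "\<dots> = (\<Sum>t=0..T. p ^ t * (y i * MM n q t i i + MM n q t i j * ((\<Sum>b=1..n. y b) - y i)))"
  proof (rule sum.cong[OF refl])
    fix t
    have "(\<Sum>b\<in>{1..n} - {i}. y b) = (\<Sum>b=1..n. y b) - y i"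
      by (subst sum.remove[of "{1..n}" i]) (use ij in auto)
    then show "p ^ t * (\<Sum>b=1..n. y b * MM n q t i b)
        = p ^ t * (y i * MM n q t i i + MM n q t i j * ((\<Sum>b=1..n. y b) - y i))"
      unfolding row_sum_MM[OF ij] by simp
  qed
  finally show ?thesis .
qed



lemma iter_b:
  fixes b :: "nat \<Rightarrow> real"
  assumes "\<And>s. c * b s \<le> b (Suc s)" "0 \<le> c" "\<And>s. 0 \<le> b s"
  shows "c ^ k * b s \<le> b (s + k)"
proof (induction k)
  case 0 then show ?case by simp
next
  case (Suc k)
  have "c ^ Suc k * b s = c * (c ^ k * b s)" by simp
  also have "\<dots> \<le> c * b (s + k)" by (rule mult_left_mono[OF Suc assms(2)])
  also have "\<dots> \<le> b (s + Suc k)" using assms(1)[of "s + k"] by simp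
  finally show ?case .
qed

lemma upper_abs:
  fixes a b :: "nat \<Rightarrow> real" and N q p yi Y :: real
  assumes a0: "\<And>t. 0 \<le> a t" and b0: "\<And>t. 0 \<le> b t" and N: "N > 1"
    and R: "\<And>t. a t + (N - 1) * b t \<le> (N * q + real t) ^ t"
    and p: "p > 0" and pd: "p * (N * q) \<ge> 1" and q: "q \<ge> 0"
  shows "\<bar>\<Sum>t=0..T. p ^ t * (yi * a t + b t * Y)\<bar>
     \<le> (\<bar>yi\<bar> + \<bar>Y\<bar> / (N - 1)) * (real T + 1) * (p * (N * q + real T)) ^ T"
proof -
  define C where "C = \<bar>yi\<bar> + \<bar>Y\<bar> / (N - 1)"
  have C0: "0 \<le> C" unfolding C_def using N by simp
  have trm: "\<bar>p ^ t * (yi * a t + b t * Y)\<bar> \<le> C * (p * (N * q + real T)) ^ T" if t: "t \<le> T" for t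
  proof -
    have at: "a t \<le> (N * q + real t) ^ t" proof -
      have "0 \<le> (N - 1) * b t" using b0[of t] N by simp
      then show ?thesis using R[of t] by linarith
    qed
    have bt: "b t \<le> (N * q + real t) ^ t / (N - 1)" using R[of t] a0[of t] N by (simp add: field_simps)
    have "\<bar>yi * a t + b t * Y\<bar> \<le> \<bar>yi\<bar> * a t + b t * \<bar>Y\<bar>"
    proof -
      have "\<bar>yi * a t + b t * Y\<bar> \<le> \<bar>yi * a t\<bar> + \<bar>b t * Y\<bar>" by (rule abs_triangle_ineq)
      also have "\<dots> = \<bar>yi\<bar> * a t + b t * \<bar>Y\<bar>" using a0[of t] b0[of t] by (simp add: abs_mult)
      finally show ?thesis .
    qed
    also have "\<dots> \<le> \<bar>yi\<bar> * (N * q + real t) ^ t + (N * q + real t) ^ t / (N - 1) * \<bar>Y\<bar>"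
      by (intro add_mono mult_left_mono mult_right_mono at bt) auto
    also have "\<dots> = C * (N * q + real t) ^ t" unfolding C_def by (simp add: algebra_simps)
    finally have 1: "\<bar>yi * a t + b t * Y\<bar> \<le> C * (N * q + real t) ^ t" .
    have "\<bar>p ^ t * (yi * a t + b t * Y)\<bar> = p ^ t * \<bar>yi * a t + b t * Y\<bar>" using p by (simp add: abs_mult)
    also have "\<dots> \<le> p ^ t * (C * (N * q + real t) ^ t)" by (rule mult_left_mono[OF 1]) (use p in simp)
    also have "\<dots> = C * (p * (N * q + real t)) ^ t" by (simp add: power_mult_distrib)
    also have "\<dots> \<le> C * (p * (N * q + real T)) ^ t"
      by (intro mult_left_mono power_mono) (use p q N t C0 in \<open>auto intro: mult_left_mono\<close>)
    also have "\<dots> \<le> C * (p * (N * q + real T)) ^ T"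
    proof -
      have "p * (N * q) \<le> p * (N * q + real T)" using p by (intro mult_left_mono) auto
      then have "1 \<le> p * (N * q + real T)" using pd by linarith
      then show ?thesis by (intro mult_left_mono power_increasing t C0)
    qed
    finally show ?thesis .
  qed
  have "\<bar>\<Sum>t=0..T. p ^ t * (yi * a t + b t * Y)\<bar> \<le> (\<Sum>t=0..T. \<bar>p ^ t * (yi * a t + b t * Y)\<bar>)"
    by (rule sum_abs)
  also have "\<dots> \<le> (\<Sum>t=0..T. C * (p * (N * q + real T)) ^ T)" by (rule sum_mono) (rule trm, simp)
  also have "\<dots> = C * (real T + 1) * (p * (N * q + real T)) ^ T" by simp
  finally show ?thesis unfolding C_def .
qed

lemma lower_abs:
  fixes a b :: "nat \<Rightarrow> real" and N q p yi Y :: real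
  assumes a0: "\<And>t. 0 \<le> a t" and b0: "\<And>t. 0 \<le> b t" and N: "N > 2"
    and q: "q > 0" and p: "p > 0"
    and brec: "\<And>s. q * (N - 2) * b s \<le> b (Suc s)"
    and arec: "\<And>s. a (Suc s) \<le> (N - 1) * b s" and a00: "a 0 \<le> 1"
    and r: "p * (N - 2) * q \<ge> 1" and T: "T \<ge> 1"
  shows "\<bar>\<Sum>t=0..T. p ^ t * (yi * a t + b t * Y)\<bar>
     \<ge> p ^ T * b T * (\<bar>Y\<bar> - \<bar>yi\<bar> * real T * (N - 1) / ((N - 2) * q)) - \<bar>yi\<bar>"
proof -
  define c where "c = q * (N - 2)"
  have c0: "c > 0" unfolding c_def using q N by simp
  have pc: "p * c \<ge> 1" using r unfolding c_def by (simp add: mult_ac)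
  define M where "M = p ^ T * b T"
  have key1: "p ^ Suc s * c * b s \<le> M" if s: "Suc s \<le> T" for s
  proof -
    define k where "k = T - s"
    have k: "k \<ge> 1" "s + k = T" unfolding k_def using s by auto
    have "c ^ k * b s \<le> b (s + k)" by (rule iter_b) (use brec c0 b0 in \<open>auto simp: c_def\<close>)
    then have 1: "p ^ T * (c ^ k * b s) \<le> M" unfolding M_def using k p by (simp add: mult_left_mono)
    have "p ^ T * c ^ k = p ^ s * (p * c) ^ k" using k by (simp add: power_mult_distrib power_add[symmetric] mult_ac add.commute)
    also have "\<dots> \<ge> p ^ s * (p * c)"
    proof -
      have "(p * c) ^ 1 \<le> (p * c) ^ k" by (rule power_increasing) (use k pc in auto)
      then show ?thesis using p by (simp add: mult_left_mono)
    qed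
    finally have "p ^ Suc s * c \<le> p ^ T * c ^ k" by (simp add: mult_ac)
    then have "p ^ Suc s * c * b s \<le> p ^ T * c ^ k * b s" using b0[of s] by (rule mult_right_mono)
    then show ?thesis using 1 by (simp add: mult_ac)
  qed
  have key2: "(\<Sum>t=0..T. p ^ t * a t) \<le> 1 + real T * ((N - 1) * M / c)"
  proof -
    have "(\<Sum>t=0..T. p ^ t * a t) = a 0 + (\<Sum>t=Suc 0..T. p ^ t * a t)"
      by (simp add: sum.atLeast_Suc_atMost)
    also have "(\<Sum>t=Suc 0..T. p ^ t * a t) \<le> (\<Sum>t=Suc 0..T. (N - 1) * M / c)"
    proof (rule sum_mono)
      fix t assume t: "t \<in> {Suc 0..T}"
      then obtain s where s: "t = Suc s" by (cases t) auto
      have "p ^ t * a t \<le> p ^ t * ((N - 1) * b s)" using arec[of s] p s by (simp add: mult_left_mono)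
      also have "\<dots> = (N - 1) * (p ^ Suc s * c * b s) / c" using c0 s by (simp add: field_simps)
      also have "\<dots> \<le> (N - 1) * M / c"
        by (intro divide_right_mono mult_left_mono key1) (use t s N c0 in auto)
      finally show "p ^ t * a t \<le> (N - 1) * M / c" .
    qed
    also have "(\<Sum>t=Suc 0..T. (N - 1) * M / c) = real T * ((N - 1) * M / c)" by simp
    finally show ?thesis using a00 by simp
  qed
  define \<sigma> where "\<sigma> = (if Y \<ge> 0 then 1 else -1 :: real)"
  have sY: "\<sigma> * Y = \<bar>Y\<bar>" "\<bar>\<sigma>\<bar> = 1" unfolding \<sigma>_def by auto
  define E where "E = (\<Sum>t=0..T. p ^ t * (yi * a t + b t * Y))"
  have "\<sigma> * E = (\<Sum>t=0..T. p ^ t * (\<sigma> * yi * a t) + p ^ t * b t * \<bar>Y\<bar>)"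
    unfolding E_def sum_distrib_left by (rule sum.cong) (auto simp: algebra_simps sY(1)[symmetric])
  also have "\<dots> = (\<Sum>t=0..T. p ^ t * (\<sigma> * yi * a t)) + (\<Sum>t=0..T. p ^ t * b t * \<bar>Y\<bar>)"
    by (rule sum.distrib)
  finally have e1: "\<sigma> * E = (\<Sum>t=0..T. p ^ t * (\<sigma> * yi * a t)) + (\<Sum>t=0..T. p ^ t * b t * \<bar>Y\<bar>)" .
  have e2: "(\<Sum>t=0..T. - (\<bar>yi\<bar> * (p ^ t * a t))) \<le> (\<Sum>t=0..T. p ^ t * (\<sigma> * yi * a t))"
  proof (rule sum_mono)
    fix t
    have "- \<bar>yi\<bar> \<le> \<sigma> * yi" unfolding \<sigma>_def by auto
    then have "- \<bar>yi\<bar> * (p ^ t * a t) \<le> \<sigma> * yi * (p ^ t * a t)"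
      by (rule mult_right_mono) (use a0 p in simp)
    then show "- (\<bar>yi\<bar> * (p ^ t * a t)) \<le> p ^ t * (\<sigma> * yi * a t)" by (simp add: mult_ac)
  qed
  have e3: "(\<Sum>t=0..T. - (\<bar>yi\<bar> * (p ^ t * a t))) = - (\<bar>yi\<bar> * (\<Sum>t=0..T. p ^ t * a t))"
    by (simp add: sum_negf sum_distrib_left)
  have e4: "\<bar>yi\<bar> * (\<Sum>t=0..T. p ^ t * a t) \<le> \<bar>yi\<bar> * (1 + real T * ((N - 1) * M / c))"
    using key2 by (simp add: mult_left_mono)
  have e5: "p ^ T * b T * \<bar>Y\<bar> \<le> (\<Sum>t=0..T. p ^ t * b t * \<bar>Y\<bar>)"
    by (rule member_le_sum) (use p b0 in auto)
  have "- (\<bar>yi\<bar> * (1 + real T * ((N - 1) * M / c))) + M * \<bar>Y\<bar> \<le> \<sigma> * E"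
    using e1 e2 e3 e4 e5 unfolding M_def by linarith
  moreover have "\<sigma> * E \<le> \<bar>E\<bar>" unfolding \<sigma>_def by auto
  moreover have "- (\<bar>yi\<bar> * (1 + real T * ((N - 1) * M / c))) + M * \<bar>Y\<bar>
      = M * (\<bar>Y\<bar> - \<bar>yi\<bar> * real T * (N - 1) / ((N - 2) * q)) - \<bar>yi\<bar>"
    unfolding c_def using q N by (simp add: field_simps)
  ultimately show ?thesis unfolding E_def M_def by linarith
qed

lemma j_choice:
  fixes i n :: nat
  assumes "i \<in> {1..n}" "n \<ge> 2"
  obtains j :: nat where "j \<in> {1..n}" "i \<noteq> j"
proof (cases "i = 1")
  case True then show ?thesis using that[of 2] assms by auto
next
  case False then show ?thesis using that[of 1] assms by auto
qed

lemma fixedn_upper: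
  fixes y :: "nat \<Rightarrow> real"
  assumes n: "n \<ge> 2" and i: "i \<in> {1..n}" and q: "0 < q" "q \<le> 1" and p: "p > 0"
    and pd: "p * (real n * q) \<ge> 1"
  shows "\<bar>gnp_expect n q (\<lambda>A. CC n A p T y i)\<bar>
    \<le> (\<bar>y i\<bar> + \<bar>(\<Sum>b=1..n. y b) - y i\<bar> / (real n - 1)) * (real T + 1) * (p * (real n * q + real T)) ^ T"
proof -
  obtain j where j: "j \<in> {1..n}" "i \<noteq> j" using j_choice[OF i n] by blast
  show ?thesis unfolding expect_CC[OF i j]
    by (rule upper_abs) (use q p pd n MM_nonneg row_bound[OF _ _ i j] in auto)
qed

lemma fixedn_lower:
  fixes y :: "nat \<Rightarrow> real"
  assumes n: "n \<ge> 3" and i: "i \<in> {1..n}" and q: "0 < q" "q \<le> 1" and p: "p > 0"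
    and r: "p * (real n - 2) * q \<ge> 1" and T: "T \<ge> 1"
  shows "\<exists>M. M \<ge> (p * (real n - 2) * q) ^ T / (real n - 2) \<and>
    \<bar>gnp_expect n q (\<lambda>A. CC n A p T y i)\<bar> \<ge>
      M * (\<bar>(\<Sum>b=1..n. y b) - y i\<bar> - \<bar>y i\<bar> * real T * (real n - 1) / ((real n - 2) * q)) - \<bar>y i\<bar>"
proof -
  obtain j where j: "j \<in> {1..n}" "i \<noteq> j" using j_choice[OF i] n by force
  define b where "b t = MM n q t i j" for t
  define c where "c = q * (real n - 2)"
  have c0: "c \<ge> 0" using q n unfolding c_def by simp
  have brec: "\<And>s. c * b s \<le> b (Suc s)" unfolding b_def c_def using b_rec[OF _ _ i j] q by simp
  have b1: "b 1 = q" unfolding b_def by (rule MM_1[OF i j])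
  have "c ^ (T - 1) * b 1 \<le> b (1 + (T - 1))"
    by (rule iter_b[where c=c and b=b, OF brec c0]) (use MM_nonneg q in \<open>auto simp: b_def\<close>)
  then have bT: "c ^ (T - 1) * q \<le> b T" using T b1 by simp
  have "(p * (real n - 2) * q) ^ T / (real n - 2) = p ^ T * (c ^ (T - 1) * q)"
  proof -
    have "(p * (real n - 2) * q) ^ T = (p * c) ^ (Suc (T - 1))" using T unfolding c_def by (simp add: mult_ac)
    also have "\<dots> = p ^ T * c ^ (T - 1) * c"
    proof -
      obtain T' where T': "T = Suc T'" using T by (cases T) auto
      show ?thesis unfolding T' by (simp add: power_mult_distrib mult_ac)
    qed
    finally show ?thesis using n unfolding c_def by (simp add: field_simps)
  qed
  also have "\<dots> \<le> p ^ T * b T" using bT p by (simp add: mult_left_mono)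
  finally have M: "(p * (real n - 2) * q) ^ T / (real n - 2) \<le> p ^ T * b T" .
  have "\<bar>gnp_expect n q (\<lambda>A. CC n A p T y i)\<bar> \<ge>
      p ^ T * b T * (\<bar>(\<Sum>b=1..n. y b) - y i\<bar> - \<bar>y i\<bar> * real T * (real n - 1) / ((real n - 2) * q)) - \<bar>y i\<bar>"
    unfolding expect_CC[OF i j] b_def
    by (rule lower_abs) (use q p r n T MM_nonneg b_rec[OF _ _ i j] a_rec[OF _ _ i j] MM_0 in auto)
  then show ?thesis using M by blast
qed



lemma partA_fixed:
  fixes y :: "nat \<Rightarrow> real" and n T :: nat
  assumes n: "n \<ge> 16" and i: "i \<in> {1..n}"
    and d1: "ln (real n) \<le> q * real n" and d2: "q * real n \<le> sqrt (real n)"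
    and p: "p > 0" and eps: "\<epsilon> > 0" and sc: "real n * p * q \<ge> 1 + \<epsilon>" and del: "\<delta> > 0"
    and TA: "real T \<le> (1 - \<delta>) * ln (real n) / ln (real n * p * q)"
    and Teta: "real T \<le> \<delta> / (4 * (1 / ln (1 + \<epsilon>))) * (q * real n)"
    and K: "\<bar>(\<Sum>b=1..n. y b) - y i\<bar> / (real n - 1) \<le> K - \<bar>y i\<bar>"
    and cb: "K * ((1 / ln (1 + \<epsilon>)) * ln (real n) + 1) * real n powr (- (3 * \<delta> / 4)) \<le> c"
  shows "\<bar>gnp_expect n q (\<lambda>A. CC n A p T y i)\<bar> \<le> c * real n"
proof -
  define L where "L = 1 / ln (1 + \<epsilon>)"
  define d where "d = q * real n"
  have lnn: "ln (real n) > 0" using n by simp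
  have d0: "d > 0" using d1 lnn unfolding d_def by simp
  have q0: "q > 0" using d0 n unfolding d_def by (simp add: zero_less_mult_iff)
  have s1: "1 \<le> sqrt (real n)" using n by simp
  have "sqrt (real n) * 1 \<le> sqrt (real n) * sqrt (real n)" using s1 by (intro mult_left_mono) auto
  moreover have "sqrt (real n) * sqrt (real n) = real n" by simp
  ultimately have "sqrt (real n) \<le> real n" by simp
  then have "q * real n \<le> real n" using d2 by linarith
  then have q1: "q \<le> 1" using n by (simp add: mult_le_cancel_right2)
  have le1: "ln (1 + \<epsilon>) > 0" using eps by simp
  have L0: "L > 0" unfolding L_def using le1 by simp
  have pd: "p * d = real n * p * q" unfolding d_def by simp
  have pd1: "p * d \<ge> 1 + \<epsilon>" using sc unfolding pd .
  define lp where "lp = ln (p * d)"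
  have lp: "lp \<ge> ln (1 + \<epsilon>)" unfolding lp_def using pd1 eps by simp
  have lp0: "lp > 0" using lp le1 by linarith
  have TL: "real T * lp \<le> (1 - \<delta>) * ln (real n)"
    using TA lp0 unfolding lp_def pd[symmetric] by (simp add: pos_le_divide_eq)
  have "real T * ln (1 + \<epsilon>) \<le> real T * lp" using lp by (simp add: mult_left_mono)
  also have "\<dots> \<le> ln (real n)"
  proof -
    have "0 \<le> \<delta> * ln (real n)" using del lnn by simp
    then show ?thesis using TL by (simp add: left_diff_distrib)
  qed
  finally have TL2: "real T \<le> L * ln (real n)" unfolding L_def using le1 by (simp add: field_simps)
  have "(p * d) ^ T = exp (real T * lp)" unfolding lp_def using pd1 eps
    by (simp add: exp_of_nat_mult)
  also have "\<dots> \<le> exp ((1 - \<delta>) * ln (real n))" using TL by simp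
  also have "\<dots> = real n powr (1 - \<delta>)" using n by (simp add: powr_def)
  finally have P1: "(p * d) ^ T \<le> real n powr (1 - \<delta>)" .
  have "(1 + real T / d) ^ T \<le> exp (real T / d) ^ T"
    by (rule power_mono) (use d0 in auto)
  also have "\<dots> = exp (real T * (real T / d))" by (rule exp_of_nat_mult[symmetric])
  also have "\<dots> \<le> exp (\<delta> / 4 * ln (real n))"
  proof -
    have "real T / d \<le> \<delta> / (4 * L)" using Teta d0 unfolding L_def d_def by (simp add: divide_le_eq mult_ac)
    then have "real T * (real T / d) \<le> (L * ln (real n)) * (\<delta> / (4 * L))"
      by (intro mult_mono TL2) (use d0 L0 del lnn in auto)
    also have "\<dots> = \<delta> / 4 * ln (real n)" using L0 by simp
    finally show ?thesis by simp
  qed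
  also have "\<dots> = real n powr (\<delta> / 4)" using n by (simp add: powr_def)
  finally have P2: "(1 + real T / d) ^ T \<le> real n powr (\<delta> / 4)" .
  have "p * (real n * q + real T) = (p * d) * (1 + real T / d)"
  proof -
    have "real n * q = d" unfolding d_def by simp
    then show ?thesis using d0 by (simp add: distrib_left distrib_right)
  qed
  then have "(p * (real n * q + real T)) ^ T = (p * d) ^ T * (1 + real T / d) ^ T"
    by (metis power_mult_distrib)
  also have "\<dots> \<le> real n powr (1 - \<delta>) * real n powr (\<delta> / 4)"
    by (intro mult_mono P1 P2) (use d0 in auto)
  also have "\<dots> = real n * real n powr (- (3 * \<delta> / 4))"
  proof -
    have "real n powr (1 - \<delta>) * real n powr (\<delta> / 4) = real n powr (1 + (- (3 * \<delta> / 4)))"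
      by (simp add: powr_add[symmetric])
    also have "\<dots> = real n powr 1 * real n powr (- (3 * \<delta> / 4))" by (rule powr_add)
    finally show ?thesis using n by simp
  qed
  finally have P3: "(p * (real n * q + real T)) ^ T \<le> real n * real n powr (- (3 * \<delta> / 4))" .
  have "\<bar>gnp_expect n q (\<lambda>A. CC n A p T y i)\<bar>
    \<le> (\<bar>y i\<bar> + \<bar>(\<Sum>b=1..n. y b) - y i\<bar> / (real n - 1)) * (real T + 1) * (p * (real n * q + real T)) ^ T"
    by (rule fixedn_upper) (use n i q0 q1 p pd1 eps in \<open>auto simp: d_def mult_ac\<close>)
  also have "\<dots> \<le> K * (L * ln (real n) + 1) * (real n * real n powr (- (3 * \<delta> / 4)))"
  proof -
    have K0: "0 \<le> K"
    proof -
      have "0 \<le> \<bar>(\<Sum>b=1..n. y b) - y i\<bar> / (real n - 1)" using n by simp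
      then show ?thesis using K by linarith
    qed
    have "0 \<le> L * ln (real n)" using L0 lnn by simp
    moreover have "0 \<le> p * (real n * q + real T)" using p q0 by simp
    ultimately show ?thesis
      by (intro mult_mono P3) (use K K0 TL2 in auto)
  qed
  also have "\<dots> = (K * (L * ln (real n) + 1) * real n powr (- (3 * \<delta> / 4))) * real n"
    by (simp add: mult_ac)
  also have "\<dots> \<le> c * real n" using cb unfolding L_def by (rule mult_right_mono) simp
  finally show ?thesis .
qed

lemma partB_fixed:
  fixes y :: "nat \<Rightarrow> real" and n T :: nat
  assumes n: "n \<ge> 16" and i: "i \<in> {1..n}"
    and d1: "ln (real n) \<le> q * real n" and d2: "q * real n \<le> sqrt (real n)"
    and p: "p > 0" and eps: "\<epsilon> > 0" and sc: "real n * p * q \<ge> 1 + \<epsilon>" and del: "\<delta> > 0"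
    and T1: "T \<ge> 1"
    and TB: "real T \<ge> (1 + \<delta>) * ln (real n) / ln (real n * p * q)"
    and Teta: "real T \<le> \<bar>ybar\<bar> / (16 * (\<bar>y i\<bar> + 1)) * (q * real n)"
    and Td: "real T \<le> q * real n"
    and Y: "\<bar>(\<Sum>b=1..n. y b) - y i\<bar> \<ge> 3 / 4 * \<bar>ybar\<bar> * real n"
    and dl: "\<delta> * ln (real n) \<ge> 2"
    and yb: "\<bar>ybar\<bar> * real n / 4 \<ge> \<bar>y i\<bar>"
  shows "\<bar>gnp_expect n q (\<lambda>A. CC n A p T y i)\<bar> \<ge> \<bar>ybar\<bar> / 4 * real n"
proof -
  define d where "d = q * real n"
  have lnn: "ln (real n) > 0" using n by simp
  have d0: "d > 0" using d1 lnn unfolding d_def by simp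
  have q0: "q > 0" using d0 n unfolding d_def by (simp add: zero_less_mult_iff)
  have s1: "1 \<le> sqrt (real n)" using n by simp
  have "sqrt (real n) * 1 \<le> sqrt (real n) * sqrt (real n)" using s1 by (intro mult_left_mono) auto
  moreover have ss: "sqrt (real n) * sqrt (real n) = real n" by simp
  ultimately have "sqrt (real n) \<le> real n" by simp
  then have "q * real n \<le> real n" using d2 by linarith
  then have q1: "q \<le> 1" using n by (simp add: mult_le_cancel_right2)
  define lp where "lp = ln (real n * p * q)"
  have lp0: "lp > 0" unfolding lp_def using sc eps by simp
  have TL: "real T * lp \<ge> (1 + \<delta>) * ln (real n)"
    using TB lp0 unfolding lp_def by (simp add: pos_divide_le_eq)
  define r where "r = p * (real n - 2) * q"
  have r_eq: "r = (real n * p * q) * (1 - 2 / real n)" unfolding r_def using n by (simp add: field_simps)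
  have r0: "r > 0" unfolding r_def using p q0 n by simp
  have lr: "ln r = lp + ln (1 - 2 / real n)"
  proof -
    have "0 < real n * p * q" using sc eps by linarith
    moreover have "0 < 1 - 2 / real n" using n by simp
    ultimately show ?thesis unfolding r_eq lp_def by (rule ln_mult_pos)
  qed
  have "- (2 / real n) - 2 * (2 / real n)\<^sup>2 \<le> ln (1 - 2 / real n)"
    by (rule ln_one_minus_pos_lower_bound) (use n in auto)
  moreover have "2 * (2 / real n)\<^sup>2 \<le> 1 / real n" using n by (simp add: power2_eq_square field_simps)
  ultimately have l2: "ln (1 - 2 / real n) \<ge> - 3 / real n" by simp
  have "real T * (3 / real n) \<le> sqrt (real n) * (3 / real n)"
    using Td d2 n by (intro mult_right_mono) auto
  also have "\<dots> \<le> 1"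
  proof -
    have "3 \<le> sqrt (real n)"
      by (rule real_le_rsqrt) (use n in simp)
    then have "3 * sqrt (real n) \<le> sqrt (real n) * sqrt (real n)" by (intro mult_right_mono) auto
    then show ?thesis using n ss by (simp add: field_simps)
  qed
  finally have T3: "real T * (3 / real n) \<le> 1" .
  have e1: "real T * ln r = real T * lp + real T * ln (1 - 2 / real n)" unfolding lr by (simp add: algebra_simps)
  have e2: "real T * ln (1 - 2 / real n) \<ge> real T * (- 3 / real n)" using l2 by (intro mult_left_mono) auto
  have e3: "real T * (- 3 / real n) = - (real T * (3 / real n))" by simp
  have "real T * ln r \<ge> (1 + \<delta>) * ln (real n) - 1" using e1 e2 e3 TL T3 by linarith
  then have TLr: "real T * ln r \<ge> ln (real n)" using dl by (simp add: algebra_simps)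
  have rT: "r ^ T \<ge> real n"
  proof -
    have "r ^ T = exp (real T * ln r)" using r0 by (simp add: exp_of_nat_mult)
    also have "\<dots> \<ge> exp (ln (real n))" using TLr by simp
    finally show ?thesis using n by simp
  qed
  have r1: "r \<ge> 1"
  proof (rule ccontr)
    assume "\<not> r \<ge> 1"
    then have "r ^ T \<le> 1 ^ T" using r0 by (intro power_mono) auto
    then show False using rT n by simp
  qed
  obtain M where M: "M \<ge> r ^ T / (real n - 2)"
    and E: "\<bar>gnp_expect n q (\<lambda>A. CC n A p T y i)\<bar> \<ge>
      M * (\<bar>(\<Sum>b=1..n. y b) - y i\<bar> - \<bar>y i\<bar> * real T * (real n - 1) / ((real n - 2) * q)) - \<bar>y i\<bar>"
    using fixedn_lower[OF _ i q0 q1 p _ T1, of y] n r1 unfolding r_def by auto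
  have M1: "M \<ge> 1"
  proof -
    have "real n / (real n - 2) \<ge> 1" using n by simp
    moreover have "r ^ T / (real n - 2) \<ge> real n / (real n - 2)" using rT n by (simp add: divide_right_mono)
    ultimately show ?thesis using M by linarith
  qed
  define W where "W = \<bar>(\<Sum>b=1..n. y b) - y i\<bar> - \<bar>y i\<bar> * real T * (real n - 1) / ((real n - 2) * q)"
  have "\<bar>y i\<bar> * real T * (real n - 1) / ((real n - 2) * q)
      \<le> \<bar>y i\<bar> * (\<bar>ybar\<bar> / (16 * (\<bar>y i\<bar> + 1)) * (q * real n)) * (real n - 1) / ((real n - 2) * q)"
    using Teta n q0 by (intro divide_right_mono mult_right_mono mult_left_mono) auto
  also have "\<dots> = (\<bar>y i\<bar> / (\<bar>y i\<bar> + 1)) * (\<bar>ybar\<bar> / 16) * real n * ((real n - 1) / (real n - 2))"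
  proof -
    have nz: "real n - 2 \<noteq> 0" "\<bar>y i\<bar> + 1 \<noteq> 0" "q \<noteq> 0" using q0 n by auto
    have aux: "\<And>A B x m c1. q \<noteq> 0 \<Longrightarrow> m \<noteq> 0 \<Longrightarrow> c1 \<noteq> 0 \<Longrightarrow>
      A * (B / (16 * c1) * (q * x)) * (x - 1) / (m * q) = (A / c1) * (B / 16) * x * ((x - 1) / m)"
      by (simp add: field_simps)
    show ?thesis using aux[OF nz(3) nz(1) nz(2)] by simp
  qed
  also have "\<dots> \<le> 1 * (\<bar>ybar\<bar> / 16) * real n * 2"
  proof -
    have "\<bar>y i\<bar> / (\<bar>y i\<bar> + 1) \<le> 1" by simp
    moreover have "(real n - 1) / (real n - 2) \<le> 2" using n by (simp add: field_simps)
    moreover have "0 \<le> (real n - 1) / (real n - 2)" using n by simp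
    ultimately show ?thesis by (intro mult_mono) auto
  qed
  finally have "\<bar>y i\<bar> * real T * (real n - 1) / ((real n - 2) * q) \<le> \<bar>ybar\<bar> / 8 * real n" by simp
  then have W: "W \<ge> \<bar>ybar\<bar> / 2 * real n" unfolding W_def using Y by linarith
  moreover have "0 \<le> \<bar>ybar\<bar> / 2 * real n" by simp
  ultimately have W0: "0 \<le> W" by linarith
  have "M * W \<ge> 1 * W" using M1 W0 by (intro mult_right_mono) auto
  then have "M * W \<ge> \<bar>ybar\<bar> / 2 * real n" using W by simp
  then show ?thesis using E yb unfolding W_def by simp
qed

theorem theorem2:
  fixes y :: "nat \<Rightarrow> real" and ybar :: real
    and p q :: "nat \<Rightarrow> real" and T :: "nat \<Rightarrow> nat"
    and \<epsilon> :: real and i :: nat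
  assumes ymean: "(\<lambda>n. (\<Sum>j=1..n. y j) / real n) \<longlonglongrightarrow> ybar"
    and ybar_nz: "ybar \<noteq> 0"
    and p_pos: "\<forall>n. p n > 0"
    and T_ge1: "\<forall>n. T n \<ge> 1"
    and q_range: "eventually (\<lambda>n. ln (real n) \<le> q n * real n \<and> q n * real n \<le> sqrt (real n)) at_top"
    and T_small: "(\<lambda>n. real (T n)) \<in> o(\<lambda>n. q n * real n)"
    and eps_pos: "\<epsilon> > 0"
    and supercrit: "eventually (\<lambda>n. real n * p n * q n \<ge> 1 + \<epsilon>) at_top"
    and i_pos: "i \<ge> 1"
  shows "(\<forall>\<delta>>0. eventually (\<lambda>n. real (T n) \<le> (1 - \<delta>) * ln (real n) / ln (real n * p n * q n)) at_top
            \<longrightarrow> (\<lambda>n. gnp_expect n (q n) (\<lambda>A. CC n A (p n) (T n) y i)) \<in> o(\<lambda>n. real n))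
       \<and> (\<forall>\<delta>>0. eventually (\<lambda>n. real (T n) \<ge> (1 + \<delta>) * ln (real n) / ln (real n * p n * q n)) at_top
            \<longrightarrow> (\<exists>c>0. eventually (\<lambda>n. \<bar>gnp_expect n (q n) (\<lambda>A. CC n A (p n) (T n) y i)\<bar> \<ge> c * real n) at_top))"
proof -
  have LY: "(\<lambda>n. ((\<Sum>j=1..n. y j) - y i) / real n) \<longlonglongrightarrow> ybar"
  proof -
    have "(\<lambda>n. y i / real n) \<longlonglongrightarrow> 0" by real_asymp
    then have "(\<lambda>n. (\<Sum>j=1..n. y j) / real n - y i / real n) \<longlonglongrightarrow> ybar - 0"
      by (intro tendsto_diff ymean)
    then show ?thesis by (simp add: diff_divide_distrib)
  qed
  have LY1: "(\<lambda>n. ((\<Sum>j=1..n. y j) - y i) / (real n - 1)) \<longlonglongrightarrow> ybar"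
  proof -
    have "(\<lambda>n::nat. real n / (real n - 1)) \<longlonglongrightarrow> 1" by real_asymp
    then have "(\<lambda>n. ((\<Sum>j=1..n. y j) - y i) / real n * (real n / (real n - 1))) \<longlonglongrightarrow> ybar * 1"
      by (intro tendsto_mult LY)
    then have A: "(\<lambda>n. ((\<Sum>j=1..n. y j) - y i) / real n * (real n / (real n - 1))) \<longlonglongrightarrow> ybar"
      by (simp only: mult_1_right)
    have B: "eventually (\<lambda>n. ((\<Sum>j=1..n. y j) - y i) / real n * (real n / (real n - 1))
        = ((\<Sum>j=1..n. y j) - y i) / (real n - 1)) at_top"
      using eventually_ge_at_top[of "2::nat"] by eventually_elim (simp add: field_simps)
    show ?thesis by (rule Lim_transform_eventually[OF A B])
  qed
  have base: "eventually (\<lambda>n. n \<ge> 16 \<and> i \<in> {1..n} \<and> ln (real n) \<le> q n * real n \<and>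
      q n * real n \<le> sqrt (real n) \<and> real n * p n * q n \<ge> 1 + \<epsilon>) at_top"
    using eventually_ge_at_top[of "max 16 i"] q_range supercrit by eventually_elim (use i_pos in auto)
  have Tsm: "eventually (\<lambda>n. real (T n) \<le> \<eta> * (q n * real n)) at_top" if "\<eta> > 0" for \<eta>
    using landau_o.smallD[OF T_small that] base
  proof eventually_elim
    case (elim n)
    have "ln (real n) > 0" using elim by simp
    then have "q n * real n > 0" using elim by linarith
    then show ?case using elim(1) by simp
  qed
  show ?thesis
  proof (intro conjI allI impI)
    fix \<delta> :: real
    assume del: "\<delta> > 0"
      and HA: "eventually (\<lambda>n. real (T n) \<le> (1 - \<delta>) * ln (real n) / ln (real n * p n * q n)) at_top"
    show "(\<lambda>n. gnp_expect n (q n) (\<lambda>A. CC n A (p n) (T n) y i)) \<in> o(\<lambda>n. real n)"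
    proof (rule landau_o.smallI)
      fix c :: real assume c: "c > 0"
      define L where "L = 1 / ln (1 + \<epsilon>)"
      have L0: "L > 0" unfolding L_def using eps_pos by simp
      define K where "K = \<bar>y i\<bar> + \<bar>ybar\<bar> + 1"
      have e1: "eventually (\<lambda>n. real (T n) \<le> \<delta> / (4 * (1 / ln (1 + \<epsilon>))) * (q n * real n)) at_top"
        by (rule Tsm) (use del L0 in \<open>auto simp: L_def\<close>)
      have "((\<lambda>n::nat. K * ((1 / ln (1 + \<epsilon>)) * ln (real n) + 1) * real n powr (- (3 * \<delta> / 4))) \<longlongrightarrow> 0) at_top"
        using del by real_asymp
      then have e2: "eventually (\<lambda>n. K * ((1 / ln (1 + \<epsilon>)) * ln (real n) + 1) * real n powr (- (3 * \<delta> / 4)) \<le> c) at_top"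
        by (rule eventually_mono[OF order_tendstoD(2)[OF _ c]]) auto
      have e3: "eventually (\<lambda>n. \<bar>((\<Sum>j=1..n. y j) - y i) / (real n - 1) - ybar\<bar> < 1) at_top"
        using tendstoD[OF LY1, of 1] by (simp add: dist_real_def)
      show "eventually (\<lambda>n. norm (gnp_expect n (q n) (\<lambda>A. CC n A (p n) (T n) y i)) \<le> c * norm (real n)) at_top"
        using base HA e1 e2 e3
      proof eventually_elim
        case (elim n)
        have "\<bar>(\<Sum>b=1..n. y b) - y i\<bar> / (real n - 1) = \<bar>((\<Sum>j=1..n. y j) - y i) / (real n - 1)\<bar>"
          using elim by simp
        also have "\<dots> \<le> K - \<bar>y i\<bar>" using elim(5) unfolding K_def by linarith
        finally have K: "\<bar>(\<Sum>b=1..n. y b) - y i\<bar> / (real n - 1) \<le> K - \<bar>y i\<bar>" .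
        have "\<bar>gnp_expect n (q n) (\<lambda>A. CC n A (p n) (T n) y i)\<bar> \<le> c * real n"
          by (rule partA_fixed[OF _ _ _ _ _ eps_pos _ del _ _ K]) (use elim p_pos in auto)
        then show ?case by simp
      qed
    qed
  next
    fix \<delta> :: real
    assume del: "\<delta> > 0"
      and HB: "eventually (\<lambda>n. real (T n) \<ge> (1 + \<delta>) * ln (real n) / ln (real n * p n * q n)) at_top"
    have yb0: "\<bar>ybar\<bar> > 0" using ybar_nz by simp
    have f1: "eventually (\<lambda>n. real (T n) \<le> \<bar>ybar\<bar> / (16 * (\<bar>y i\<bar> + 1)) * (q n * real n)) at_top"
      by (rule Tsm) (use yb0 in auto)
    have f2: "eventually (\<lambda>n. real (T n) \<le> 1 * (q n * real n)) at_top"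
      by (rule Tsm) simp
    have f3: "eventually (\<lambda>n. \<bar>((\<Sum>j=1..n. y j) - y i) / real n - ybar\<bar> < \<bar>ybar\<bar> / 4) at_top"
      using tendstoD[OF LY, of "\<bar>ybar\<bar> / 4"] yb0 by (simp add: dist_real_def)
    have "filterlim (\<lambda>n::nat. \<delta> * ln (real n)) at_top at_top" using del by real_asymp
    then have f4: "eventually (\<lambda>n. \<delta> * ln (real n) \<ge> 2) at_top"
      by (simp add: filterlim_at_top)
    have "filterlim (\<lambda>n::nat. \<bar>ybar\<bar> * real n / 4) at_top at_top" using yb0 by real_asymp
    then have f5: "eventually (\<lambda>n. \<bar>ybar\<bar> * real n / 4 \<ge> \<bar>y i\<bar>) at_top"
      by (simp add: filterlim_at_top)
    show "\<exists>c>0. eventually (\<lambda>n. \<bar>gnp_expect n (q n) (\<lambda>A. CC n A (p n) (T n) y i)\<bar> \<ge> c * real n) at_top"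
    proof (intro exI conjI)
      show "\<bar>ybar\<bar> / 4 > 0" using yb0 by simp
      show "eventually (\<lambda>n. \<bar>gnp_expect n (q n) (\<lambda>A. CC n A (p n) (T n) y i)\<bar> \<ge> \<bar>ybar\<bar> / 4 * real n) at_top"
        using base HB f1 f2 f3 f4 f5
      proof eventually_elim
        case (elim n)
        have n0: "real n > 0" using elim by simp
        have "\<bar>((\<Sum>j=1..n. y j) - y i) / real n\<bar> \<ge> 3 / 4 * \<bar>ybar\<bar>" using elim(5) by linarith
        then have "\<bar>(\<Sum>j=1..n. y j) - y i\<bar> / real n \<ge> 3 / 4 * \<bar>ybar\<bar>" by simp
        then have Y: "\<bar>(\<Sum>b=1..n. y b) - y i\<bar> \<ge> 3 / 4 * \<bar>ybar\<bar> * real n"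
          using n0 by (simp add: le_divide_eq)
        show ?case
          by (rule partB_fixed[OF _ _ _ _ _ eps_pos _ del _ _ _ _ Y]) (use elim p_pos T_ge1 in auto)
      qed
    qed
  qed
qed


end
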